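(* Let $\pi\in D_n$ and use the block decomposition and notation described in the context. Assume $r_\mu\ge 1$ and $\sum_{j=1}^{r_\mu} i_{k_j}\le k_1$ (i.e. $\Phi(\pi)$ is a standard OGS elementary element). Then $\pi$ can be written uniquely as $\pi=\pi^{\bullet}\cdot\pi^{\circ}$ with $\pi^{\bullet}\in Id^{\bullet}_n$ and $\pi^{\circ}\in S^{\circ}_n$, and $$\pi^{\circ}=\prod_{j=1}^{r_\mu}t_{k_j}^{i_{k_j}},\qquad \pi^{\bullet}=\Big(\prod_{\alpha\in A} w_{\operatorname{maj}_\alpha(\pi)}\Big)\cdot w_{L_{1_1}}\cdots w_{L_{1_{\nu_1}}}\cdot w_{L_{2_1}}\cdots w_{L_{2_{\nu_2}}}\cdots w_{L_{(\mu-1)_1}}\cdots w_{L_{(\mu-1)_{\nu_{\mu-1}}}},$$ where $A=\{\alpha\in\{1,\dots,\mu-1\}:\ \nu_\alpha \text{ is odd and } 1\le \operatorname{maj}_\alpha(\pi)<k_1\}$, the first product taken in increasing order of $\alpha$. Moreover, viewed in $S_n$, $\pi^{\circ}$ has the same standard OGS form as $\Phi(\pi)$.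
   Context: $D_n$ ($n\ge2$) is the Coxeter group with generators $s_{1'},s_1,\dots,s_{n-1}$ and relations $s^2=1$, $(s_i s_{i+1})^3=1$, $(s_is_j)^2=1$ for $|i-j|\ge 2$, $(s_{1'}s_2)^3=1$, $(s_{1'}s_i)^2=1$ for $i\ne 2$. Put $t_k=s_1\cdots s_{k-1}$ ($2\le k\le n$), $w_k=s_k s_{k-1}\cdots s_2 s_1 s_{1'} s_2\cdots s_k$ ($1\le k\le n-1$). Every $\pi\in D_n$ has a unique expression $w_{1}^{j_{1}} t_{2}^{i_{2}} w_{2}^{j_{2}} \cdots w_{n-1}^{j_{n-1}} t_{n}^{i_{n}}$ ($0\le i_k\le k-1$, $0\le j_k\le1$). $\Phi:D_n\to S_n$ is the homomorphism $s_{1'}\mapsto s_1$, $s_i\mapsto s_i$; $\Phi(\pi)=t_2^{i_2}\cdots t_n^{i_n}$ in $S_n$. $S^{\circ}_n=\langle s_1,\dots,s_{n-1}\rangle\le D_n$, and $Id^\bullet_n=\{\pi:\Phi(\pi)=1\}=\langle w_1,\dots,w_{n-1}\rangle$. Block decomposition: deleting factors with zero exponent, the expression of $\pi$ becomes a word of factors $t_k^{i}$ ($i\ge1$) and $w_L$; grouping maximal runs gives $\pi=\pi_1^\circ\pi_1^\bullet\pi_2^\circ\pi_2^\bullet\cdots\pi_{\mu-1}^\circ\pi_{\mu-1}^\bullet\pi_\mu^\circ$, where each $\pi_\alpha^\bullet=w_{L_{\alpha_1}}\cdots w_{L_{\alpha_{\nu_\alpha}}}$ ($\nu_\alpha\ge1$,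 $L_{\alpha_1}<\dots<L_{\alpha_{\nu_\alpha}}$) is a maximal run of $w$-factors, each $\pi_\alpha^\circ$ with $2\le\alpha\le\mu-1$ is a nonempty maximal run of $t$-factors, and $\pi_1^\circ,\pi_\mu^\circ$ are runs of $t$-factors that may be empty ($=1$). Listing all $t$-factors in order as $t_{k_1}^{i_{k_1}},\dots,t_{k_{r_\mu}}^{i_{k_{r_\mu}}}$ ($k_1<\dots<k_{r_\mu}$), $\pi_\alpha^\circ$ consists of those with indices $r_{\alpha-1}+1,\dots,r_\alpha$ ($r_0=0$). Define $\operatorname{maj}_\alpha(\pi)=\sum_{j=1}^{r_\alpha}i_{k_j}$. *)

theory Defs
  imports Main
begin

text \<open>D_n is realised faithfully as the group of even signed permutations:
  elements are functions on int (identity outside [-n,n]), group product is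
  function composition, identity is id.  Generators:\<close>

definition sD :: "nat \<Rightarrow> int \<Rightarrow> int" where
  "sD i = (\<lambda>x. if x = int i then int i + 1 else if x = int i + 1 then int i
             else if x = - int i then - (int i + 1) else if x = - (int i + 1) then - int i
             else x)"

definition s1' :: "int \<Rightarrow> int" where
  "s1' = (\<lambda>x. if x = 1 then -2 else if x = 2 then -1 else if x = -1 then 2
             else if x = -2 then 1 else x)"

text \<open>Submonoid (= subgroup, as generators are involutions) generated by a set of maps.\<close>
inductive_set gen :: "('a \<Rightarrow> 'a) set \<Rightarrow> ('a \<Rightarrow> 'a) set" for G where
  gen_id: "id \<in> gen G"
| gen_step: "f \<in> gen G \<Longrightarrow> g \<in> G \<Longrightarrow> f \<circ> g \<in> gen G"

definition Dn :: "nat \<Rightarrow> (int \<Rightarrow> int) set" where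
  "Dn n = gen (insert s1' {sD i | i. 1 \<le> i \<and> i \<le> n - 1})"

definition Scirc :: "nat \<Rightarrow> (int \<Rightarrow> int) set" where
  "Scirc n = gen {sD i | i. 1 \<le> i \<and> i \<le> n - 1}"

definition sS :: "nat \<Rightarrow> nat \<Rightarrow> nat" where
  "sS i = (\<lambda>x. if x = i then i + 1 else if x = i + 1 then i else x)"

text \<open>The homomorphism Phi : D_n -> S_n (s1' |-> s_1, s_i |-> s_i): forget the signs.\<close>
definition Phi :: "(int \<Rightarrow> int) \<Rightarrow> nat \<Rightarrow> nat" where
  "Phi p = (\<lambda>x. nat \<bar>p (int x)\<bar>)"

definition IdBullet :: "nat \<Rightarrow> (int \<Rightarrow> int) set" where
  "IdBullet n = {p \<in> Dn n. Phi p = id}"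

definition prodl :: "('a \<Rightarrow> 'a) list \<Rightarrow> 'a \<Rightarrow> 'a" where
  "prodl fs = foldr (\<circ>) fs id"

definition tD :: "nat \<Rightarrow> int \<Rightarrow> int" where
  "tD k = prodl (map sD [1..<k])"

definition wD :: "nat \<Rightarrow> int \<Rightarrow> int" where
  "wD k = prodl (map sD (rev [1..<k+1]) @ [s1'] @ map sD [2..<k+1])"

definition tS :: "nat \<Rightarrow> nat \<Rightarrow> nat" where
  "tS k = prodl (map sS [1..<k])"

definition elemD :: "nat \<Rightarrow> (nat \<Rightarrow> nat) \<Rightarrow> (nat \<Rightarrow> nat) \<Rightarrow> int \<Rightarrow> int" where
  "elemD n i j = prodl (concat (map (\<lambda>k. [wD k ^^ j k, tD (k+1) ^^ i (k+1)]) [1..<n]))"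

definition valid_exps :: "nat \<Rightarrow> (nat \<Rightarrow> nat) \<Rightarrow> (nat \<Rightarrow> nat) \<Rightarrow> bool" where
  "valid_exps n i j \<longleftrightarrow> (\<forall>k. 2 \<le> k \<and> k \<le> n \<longrightarrow> i k \<le> k - 1) \<and>
                        (\<forall>k. 1 \<le> k \<and> k \<le> n - 1 \<longrightarrow> j k \<le> 1)"

definition tIdx :: "nat \<Rightarrow> (nat \<Rightarrow> nat) \<Rightarrow> nat set" where
  "tIdx n i = {k. 2 \<le> k \<and> k \<le> n \<and> 1 \<le> i k}"

definition k1 :: "nat \<Rightarrow> (nat \<Rightarrow> nat) \<Rightarrow> nat" where
  "k1 n i = Min (tIdx n i)"

text \<open>In the reduced word, t_k lies strictly between w_{L'} and w_L (L' < L) iff L' < k <= L.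
  A maximal run of w-factors pi^bullet_alpha is determined by its first factor w_L:
  w_L is a first factor iff j_L = 1 and every earlier w_{L'} is separated from w_L by a
  nonzero t-factor.  The runs, ordered by alpha, are ordered by their first indices.\<close>
definition run_start :: "nat \<Rightarrow> (nat \<Rightarrow> nat) \<Rightarrow> (nat \<Rightarrow> nat) \<Rightarrow> nat \<Rightarrow> bool" where
  "run_start n i j L \<longleftrightarrow> 1 \<le> L \<and> L \<le> n - 1 \<and> j L = 1 \<and>
     (\<forall>L'. 1 \<le> L' \<and> L' < L \<and> j L' = 1 \<longrightarrow> (\<exists>k. L' < k \<and> k \<le> L \<and> 1 \<le> i k))"

text \<open>The run starting at L: the w_{L'} (L' >= L, j_{L'} = 1) not separated from w_L by a
  nonzero t-factor.  nu_alpha is its cardinality.\<close>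
definition run_of :: "nat \<Rightarrow> (nat \<Rightarrow> nat) \<Rightarrow> (nat \<Rightarrow> nat) \<Rightarrow> nat \<Rightarrow> nat set" where
  "run_of n i j L = {L'. L \<le> L' \<and> L' \<le> n - 1 \<and> j L' = 1 \<and> (\<forall>k. L < k \<and> k \<le> L' \<longrightarrow> i k = 0)}"

text \<open>maj_alpha = sum of the exponents of the t-factors in pi^circ_1 ... pi^circ_alpha, i.e.
  of all t_k preceding the first factor w_L of the alpha-th run, i.e. k <= L.\<close>
definition maj_at :: "(nat \<Rightarrow> nat) \<Rightarrow> nat \<Rightarrow> nat" where
  "maj_at i L = (\<Sum>k\<in>{2..L}. i k)"

definition run_starts :: "nat \<Rightarrow> (nat \<Rightarrow> nat) \<Rightarrow> (nat \<Rightarrow> nat) \<Rightarrow> nat list" where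
  "run_starts n i j = filter (run_start n i j) [1..<n]"

text \<open>The index set A (as a list of run starts, increasing alpha).\<close>
definition A_starts :: "nat \<Rightarrow> (nat \<Rightarrow> nat) \<Rightarrow> (nat \<Rightarrow> nat) \<Rightarrow> nat list" where
  "A_starts n i j = filter (\<lambda>L. odd (card (run_of n i j L)) \<and>
       1 \<le> maj_at i L \<and> maj_at i L < k1 n i) (run_starts n i j)"

definition pi_circ :: "nat \<Rightarrow> (nat \<Rightarrow> nat) \<Rightarrow> int \<Rightarrow> int" where
  "pi_circ n i = prodl (map (\<lambda>k. tD k ^^ i k) (filter (\<lambda>k. 1 \<le> i k) [2..<n+1]))"

definition pi_bullet :: "nat \<Rightarrow> (nat \<Rightarrow> nat) \<Rightarrow> (nat \<Rightarrow> nat) \<Rightarrow> int \<Rightarrow> int" where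
  "pi_bullet n i j = prodl (map (\<lambda>L. wD (maj_at i L)) (A_starts n i j)) \<circ>
                     prodl (map wD (filter (\<lambda>L. j L = 1) [1..<n]))"

end

theory Submission
  imports Defs
begin


lemma prodl_Nil[simp]: "prodl [] = id" by (simp add: prodl_def)
lemma prodl_Cons[simp]: "prodl (f # fs) = f \<circ> prodl fs" by (simp add: prodl_def)
lemma prodl_append[simp]: "prodl (xs @ ys) = prodl xs \<circ> prodl ys"
  by (induction xs) (auto simp: comp_assoc)

lemma gen_comp: "g \<in> gen G \<Longrightarrow> f \<in> gen G \<Longrightarrow> f \<circ> g \<in> gen G"
proof (induction g rule: gen.induct)
  case gen_id then show ?case by simp
next
  case (gen_step g h) then show ?case by (metis comp_assoc gen.gen_step)
qed

lemma gen_base: "g \<in> G \<Longrightarrow> g \<in> gen G"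
  using gen.gen_step[OF gen.gen_id] by fastforce

lemma gen_mono: "f \<in> gen G \<Longrightarrow> G \<subseteq> H \<Longrightarrow> f \<in> gen H"
  by (induction f rule: gen.induct) (auto intro: gen.intros)

lemma gen_pow: "f \<in> gen G \<Longrightarrow> f ^^ m \<in> gen G"
  by (induction m) (auto intro: gen.intros gen_comp)

lemma gen_prodl: "set fs \<subseteq> gen G \<Longrightarrow> prodl fs \<in> gen G"
  by (induction fs) (auto intro: gen.intros gen_comp)

definition oddf :: "(int \<Rightarrow> int) \<Rightarrow> bool" where
  "oddf f \<longleftrightarrow> (\<forall>x. f (- x) = - f x)"

lemma oddf_comp: "oddf f \<Longrightarrow> oddf g \<Longrightarrow> oddf (f \<circ> g)"
  by (simp add: oddf_def)

lemma oddf_gen: "f \<in> gen G \<Longrightarrow> \<forall>g\<in>G. oddf g \<Longrightarrow> oddf f"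
  by (induction f rule: gen.induct) (auto simp: oddf_comp, simp add: oddf_def)

lemma inv_gen: "f \<in> gen G \<Longrightarrow> \<forall>g\<in>G. g \<circ> g = id \<Longrightarrow> \<exists>h. f \<circ> h = id \<and> h \<circ> f = id"
proof (induction f rule: gen.induct)
  case gen_id then show ?case by auto
next
  case (gen_step f g)
  obtain h where h: "f \<circ> h = id" "h \<circ> f = id" using gen_step.IH gen_step.prems by blast
  have gg: "g \<circ> g = id" using gen_step.hyps gen_step.prems by blast
  have "(f \<circ> g) \<circ> (g \<circ> h) = id" using h gg by (metis comp_assoc comp_id)
  moreover have "(g \<circ> h) \<circ> (f \<circ> g) = id" using h gg by (metis comp_assoc comp_id)
  ultimately show ?case by blast
qed

lemma sD_odd: "1 \<le> i \<Longrightarrow> oddf (sD i)"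
  by (auto simp: oddf_def sD_def)
lemma s1'_odd: "oddf s1'"
  by (auto simp: oddf_def s1'_def)
lemma sD_inv: "1 \<le> i \<Longrightarrow> sD i \<circ> sD i = id"
  by (auto simp: sD_def fun_eq_iff)
lemma s1'_inv: "s1' \<circ> s1' = id"
  by (auto simp: s1'_def fun_eq_iff)

definition GD :: "nat \<Rightarrow> (int \<Rightarrow> int) set" where
  "GD n = insert s1' {sD i | i. 1 \<le> i \<and> i \<le> n - 1}"
definition GS :: "nat \<Rightarrow> (int \<Rightarrow> int) set" where
  "GS n = {sD i | i. 1 \<le> i \<and> i \<le> n - 1}"

lemma GD_odd: "\<forall>g\<in>GD n. oddf g" by (auto simp: GD_def sD_odd s1'_odd)
lemma GD_inv: "\<forall>g\<in>GD n. g \<circ> g = id" by (auto simp: GD_def sD_inv s1'_inv)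
lemma GS_sub: "GS n \<subseteq> GD n" by (auto simp: GS_def GD_def)
lemma Dn_GD: "Dn n = gen (GD n)" by (simp add: Dn_def GD_def)
lemma Scirc_GS: "Scirc n = gen (GS n)" by (simp add: Scirc_def GS_def)

lemma Dn_odd: "f \<in> Dn n \<Longrightarrow> oddf f" using oddf_gen[OF _ GD_odd] Dn_GD by auto
lemma Dn_inv: "f \<in> Dn n \<Longrightarrow> \<exists>h. f \<circ> h = id \<and> h \<circ> f = id" using inv_gen[OF _ GD_inv] Dn_GD by auto
lemma Scirc_Dn: "f \<in> Scirc n \<Longrightarrow> f \<in> Dn n" using gen_mono[OF _ GS_sub] Dn_GD Scirc_GS by auto

lemma Scirc_pos: "f \<in> Scirc n \<Longrightarrow> \<forall>x>0. f x > 0"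
  unfolding Scirc_GS
proof (induction f rule: gen.induct)
  case gen_id then show ?case by simp
next
  case (gen_step f g)
  then obtain k where "g = sD k" "1 \<le> k" by (auto simp: GS_def)
  then have "\<forall>x>0. g x > 0" by (auto simp: sD_def)
  then show ?case using gen_step by auto
qed

definition flipP :: "(nat \<Rightarrow> bool) \<Rightarrow> int \<Rightarrow> int" where
  "flipP c = (\<lambda>x. if c (nat \<bar>x\<bar>) then - x else x)"

lemma flipP_comp: "flipP c \<circ> flipP d = flipP (\<lambda>y. c y \<noteq> d y)"
  by (auto simp: flipP_def fun_eq_iff)
lemma flipP_False: "flipP (\<lambda>_. False) = id"
  by (auto simp: flipP_def fun_eq_iff)
lemma Phi_flipP: "Phi (flipP c) = id"
  by (auto simp: flipP_def fun_eq_iff Phi_def)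
lemma flipP_odd: "oddf (flipP c)"
  by (auto simp: flipP_def oddf_def)

fun xorL :: "('a \<Rightarrow> bool) \<Rightarrow> 'a list \<Rightarrow> bool" where
  "xorL P [] = False" | "xorL P (x#xs) = (P x \<noteq> xorL P xs)"
lemma xorL_append[simp]: "xorL P (xs@ys) = (xorL P xs \<noteq> xorL P ys)"
  by (induction xs) auto
lemma xorL_xor: "xorL (\<lambda>x. P x \<noteq> Q x) xs = (xorL P xs \<noteq> xorL Q xs)"
  by (induction xs) auto
lemma xorL_filter: "xorL P (filter Q xs) = xorL (\<lambda>x. Q x \<and> P x) xs"
  by (induction xs) auto
lemma xorL_cong: "(\<And>x. x \<in> set xs \<Longrightarrow> P x = Q x) \<Longrightarrow> xorL P xs = xorL Q xs"
  by (induction xs) auto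
lemma xorL_card: "distinct xs \<Longrightarrow> xorL P xs = odd (card {x \<in> set xs. P x})"
proof (induction xs)
  case Nil then show ?case by simp
next
  case (Cons a xs)
  have fin: "finite {x \<in> set xs. P x}" by simp
  show ?case
  proof (cases "P a")
    case True
    then have "{x \<in> set (a#xs). P x} = insert a {x \<in> set xs. P x}" by auto
    then show ?thesis using Cons True fin by simp
  next
    case False
    then have "{x \<in> set (a#xs). P x} = {x \<in> set xs. P x}" by auto
    then show ?thesis using Cons False by simp
  qed
qed
lemma prodl_flips: "prodl (map (\<lambda>x. flipP (c x)) xs) = flipP (\<lambda>y. xorL (\<lambda>x. c x y) xs)"
  by (induction xs) (auto simp: flipP_False flipP_comp)

lemma wD_Suc: "1 \<le> k \<Longrightarrow> wD (Suc k) = sD (Suc k) \<circ> wD k \<circ> sD (Suc k)"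
  by (simp add: wD_def comp_assoc)

lemma wD_one: "wD 1 = flipP (\<lambda>s. (s=1) \<noteq> (s = 2))"
  by (auto simp: wD_def fun_eq_iff flipP_def sD_def s1'_def)

lemma conj_flip: "1 \<le> k \<Longrightarrow> sD (Suc k) \<circ> flipP (\<lambda>s. (s=1) \<noteq> (s = k+1)) \<circ> sD (Suc k) = flipP (\<lambda>s. (s=1) \<noteq> (s = Suc k+1))"
  by (auto simp: fun_eq_iff flipP_def sD_def nat_eq_iff)

lemma wD_flip: "1 \<le> k \<Longrightarrow> wD k = flipP (\<lambda>s. (s=1) \<noteq> (s = k+1))"
proof (induction k rule: dec_induct)
  case base then show ?case using wD_one by (simp add: eval_nat_numeral)
next
  case (step k) then show ?case using wD_Suc conj_flip by simp
qed

lemma prodl_fix: "(\<And>f. f \<in> set fs \<Longrightarrow> f x = x) \<Longrightarrow> prodl fs x = x"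
  by (induction fs) auto
lemma funpow_fix: "f x = x \<Longrightarrow> (f ^^ m) x = x"
  by (induction m) auto
lemma tD_fix: "int k < \<bar>x\<bar> \<Longrightarrow> tD k x = x"
  unfolding tD_def by (rule prodl_fix) (auto simp: sD_def)
lemma tD_Suc: "1 \<le> k \<Longrightarrow> tD (Suc k) = tD k \<circ> sD k"
  by (simp add: tD_def)
lemma tD_act: "1 \<le> k \<Longrightarrow> (\<forall>x. 1 \<le> x \<and> x < int k \<longrightarrow> tD k x = x + 1) \<and> tD k (int k) = 1"
proof (induction k rule: dec_induct)
  case base then show ?case by (simp add: tD_def)
next
  case (step k)
  have A: "tD (Suc k) x = x + 1" if "1 \<le> x" "x < int (Suc k)" for x
  proof (cases "x < int k")
    case True
    then have "sD k x = x" using that by (auto simp: sD_def)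
    then show ?thesis using step True that tD_Suc by simp
  next
    case False
    then have "x = int k" using that by simp
    then have "sD k x = int k + 1" by (simp add: sD_def)
    moreover have "tD k (int k + 1) = int k + 1" by (rule tD_fix) simp
    ultimately show ?thesis using step tD_Suc \<open>x = int k\<close> by simp
  qed
  have "sD k (int (Suc k)) = int k" by (simp add: sD_def)
  then have "tD (Suc k) (int (Suc k)) = 1" using step tD_Suc by simp
  then show ?case using A by blast
qed

lemma tD_pow: "1 \<le> x \<Longrightarrow> x + int m \<le> int k \<Longrightarrow> (tD k ^^ m) x = x + int m"
proof (induction m)
  case 0 then show ?case by simp
next
  case (Suc m)
  have k: "1 \<le> k" using Suc.prems by linarith
  have "(tD k ^^ Suc m) x = tD k (x + int m)" using Suc by simp
  also have "\<dots> = x + int m + 1" using tD_act[OF k] Suc.prems by simp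
  finally show ?case by simp
qed

lemma tD_pow_wrap: "1 \<le> x \<Longrightarrow> 1 \<le> m \<Longrightarrow> x + int m = int k + 1 \<Longrightarrow> (tD k ^^ m) x = 1"
proof -
  assume a: "1 \<le> x" "1 \<le> m" "x + int m = int k + 1"
  then obtain m' where m': "m = Suc m'" by (cases m) auto
  have k: "1 \<le> k" using a by linarith
  have "(tD k ^^ m) x = tD k ((tD k ^^ m') x)" using m' by simp
  also have "(tD k ^^ m') x = int k" using tD_pow[of x m' k] a m' by simp
  finally show ?thesis using tD_act[OF k] by simp
qed

definition Pn :: "(nat \<Rightarrow> nat) \<Rightarrow> nat \<Rightarrow> int \<Rightarrow> int" where
  "Pn i L = prodl (map (\<lambda>k. tD k ^^ i k) [2..<L+1])"

lemma Pn_list: "(\<And>k. k \<in> set ks \<Longrightarrow> i k = 0 \<or> K \<le> k) \<Longrightarrow> 1 \<le> x \<Longrightarrow>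
   x + int (sum_list (map i ks)) \<le> int K \<Longrightarrow>
   prodl (map (\<lambda>k. tD k ^^ i k) ks) x = x + int (sum_list (map i ks))"
proof (induction ks)
  case Nil then show ?case by simp
next
  case (Cons k ks)
  have IH: "prodl (map (\<lambda>k. tD k ^^ i k) ks) x = x + int (sum_list (map i ks))"
    using Cons by simp
  show ?case
  proof (cases "i k = 0")
    case True then show ?thesis using IH by simp
  next
    case False
    then have "K \<le> k" using Cons.prems(1)[of k] by simp
    then have "(tD k ^^ i k) (x + int (sum_list (map i ks))) = x + int (sum_list (map i ks)) + int (i k)"
      using Cons.prems by (intro tD_pow) auto
    then show ?thesis using IH by simp
  qed
qed

lemma sD_GS: "1 \<le> a \<Longrightarrow> a < n \<Longrightarrow> sD a \<in> gen (GS n)"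
  by (rule gen_base) (auto simp: GS_def)
lemma sD_GD: "1 \<le> a \<Longrightarrow> a < n \<Longrightarrow> sD a \<in> gen (GD n)"
  by (rule gen_base) (auto simp: GD_def)
lemma s1'_GD: "s1' \<in> gen (GD n)"
  by (rule gen_base) (auto simp: GD_def)

lemma tD_Scirc: "k \<le> n \<Longrightarrow> tD k \<in> Scirc n"
  unfolding tD_def Scirc_GS by (rule gen_prodl) (auto intro!: sD_GS)

lemma Pn_Scirc: "L \<le> n \<Longrightarrow> Pn i L \<in> Scirc n"
  unfolding Pn_def Scirc_GS
  by (rule gen_prodl) (auto intro!: gen_pow tD_Scirc[unfolded Scirc_GS])

lemma wD_Dn: "k \<le> n - 1 \<Longrightarrow> wD k \<in> Dn n"
  unfolding wD_def Dn_GD by (rule gen_prodl) (auto intro!: sD_GD s1'_GD)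

lemma Scirc_odd: "f \<in> Scirc n \<Longrightarrow> oddf f" using Scirc_Dn Dn_odd by blast
lemma Dn_inj: "f \<in> Dn n \<Longrightarrow> inj f"
  using Dn_inv by (metis inj_on_id inj_on_imageI2 image_id comp_def inj_def id_apply)

lemma comp_flip:
  assumes "oddf P" "inj P"
  shows "P \<circ> flipP c = flipP (\<lambda>y. \<exists>s. c s \<and> y = nat \<bar>P (int s)\<bar>) \<circ> P"
proof (rule ext)
  fix x
  have ab: "\<bar>P (int (nat \<bar>x\<bar>))\<bar> = \<bar>P x\<bar>"
  proof (cases "x \<ge> 0")
    case True then show ?thesis by simp
  next
    case False then have "int (nat \<bar>x\<bar>) = - x" by simp
    then have "P (int (nat \<bar>x\<bar>)) = - P x" using assms(1) unfolding oddf_def by metis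
    then show ?thesis by simp
  qed
  show "(P \<circ> flipP c) x = (flipP (\<lambda>y. \<exists>s. c s \<and> y = nat \<bar>P (int s)\<bar>) \<circ> P) x"
  proof (cases "c (nat \<bar>x\<bar>)")
    case True
    then have "\<exists>s. c s \<and> nat \<bar>P x\<bar> = nat \<bar>P (int s)\<bar>" using ab by (intro exI[of _ "nat \<bar>x\<bar>"]) simp
    then show ?thesis using True assms(1) by (simp add: flipP_def oddf_def)
  next
    case False
    have "\<not> (c s \<and> nat \<bar>P x\<bar> = nat \<bar>P (int s)\<bar>)" for s
    proof
      assume h: "c s \<and> nat \<bar>P x\<bar> = nat \<bar>P (int s)\<bar>"
      then have "\<bar>P x\<bar> = \<bar>P (int s)\<bar>" by (metis abs_ge_zero nat_0_le)
      then have "P x = P (int s) \<or> P x = - P (int s)" by (simp add: abs_eq_iff)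
      then have "P x = P (int s) \<or> P x = P (- int s)" using assms(1) by (simp add: oddf_def)
      then have "x = int s \<or> x = - int s" using assms(2) by (auto dest: injD)
      then have "nat \<bar>x\<bar> = s" by auto
      then show False using h False by simp
    qed
    then have "\<not> (\<exists>s. c s \<and> nat \<bar>P x\<bar> = nat \<bar>P (int s)\<bar>)" by blast
    then show ?thesis using False unfolding flipP_def comp_def by auto
  qed
qed

definition aL :: "(nat \<Rightarrow> nat) \<Rightarrow> nat \<Rightarrow> nat" where
  "aL i L = nat \<bar>Pn i L 1\<bar>"

lemma Pn_Suc: "1 \<le> n \<Longrightarrow> Pn i (Suc n) = Pn i n \<circ> (tD (Suc n) ^^ i (Suc n))"
  by (simp add: Pn_def)

lemma Pn_fix: "Pn i n (int n + 1) = int n + 1"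
  unfolding Pn_def by (rule prodl_fix) (auto intro!: funpow_fix tD_fix)

lemma elemD_Suc: "1 \<le> n \<Longrightarrow> elemD (Suc n) i j = elemD n i j \<circ> (wD n ^^ j n) \<circ> (tD (Suc n) ^^ i (Suc n))"
  by (simp add: elemD_def comp_assoc)

lemma elemD_decomp:
  "(\<And>k. 1 \<le> k \<Longrightarrow> k < n \<Longrightarrow> j k \<le> 1) \<Longrightarrow>
   elemD n i j = flipP (\<lambda>y. xorL (\<lambda>L. j L = 1 \<and> ((y = aL i L) \<noteq> (y = L+1))) [1..<n]) \<circ> Pn i n"
proof (induction n)
  case 0 then show ?case by (simp add: elemD_def Pn_def flipP_False)
next
  case (Suc n)
  show ?case
  proof (cases "n = 0")
    case True then show ?thesis by (simp add: elemD_def Pn_def flipP_False)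
  next
    case False
    then have n1: "1 \<le> n" by simp
    define X where "X = (\<lambda>y. xorL (\<lambda>L. j L = 1 \<and> ((y = aL i L) \<noteq> (y = L+1))) [1..<n])"
    define T where "T = tD (Suc n) ^^ i (Suc n)"
    have IH: "elemD n i j = flipP X \<circ> Pn i n" unfolding X_def by (rule Suc.IH) (use Suc.prems in auto)
    have E: "elemD (Suc n) i j = flipP X \<circ> Pn i n \<circ> (wD n ^^ j n) \<circ> T"
      using elemD_Suc[OF n1] IH T_def by simp
    have PS: "Pn i (Suc n) = Pn i n \<circ> T" using Pn_Suc[OF n1] T_def by simp
    have jn: "j n \<le> 1" using Suc.prems n1 by simp
    show ?thesis
    proof (cases "j n = 1")
      case False
      then have "j n = 0" using jn by simp
      then show ?thesis using E PS X_def False by (simp add: comp_assoc)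
    next
      case True
      have PD: "Pn i n \<in> Dn n" using Pn_Scirc Scirc_Dn by blast
      have odd: "oddf (Pn i n)" using PD Dn_odd by blast
      have inj: "inj (Pn i n)" using PD Dn_inj by blast
      have fx: "Pn i n (int (n+1)) = int (n+1)" using Pn_fix[of i n] by (simp add: add.commute)
      have ne: "aL i n \<noteq> n + 1"
      proof
        assume "aL i n = n + 1"
        then have "\<bar>Pn i n 1\<bar> = \<bar>Pn i n (int (n+1))\<bar>" using fx by (simp add: aL_def)
        moreover have "Pn i n (- int (n+1)) = - Pn i n (int (n+1))" using odd unfolding oddf_def by blast
        ultimately have "Pn i n 1 = Pn i n (int (n+1)) \<or> Pn i n 1 = Pn i n (- int (n+1))"
          by (auto simp: abs_eq_iff)
        then have "(1::int) = int (n+1) \<or> (1::int) = - int (n+1)" using inj by (auto dest: injD)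
        then show False using n1 by auto
      qed
      have d: "(\<lambda>y. \<exists>s. ((s=1) \<noteq> (s = n+1)) \<and> y = nat \<bar>Pn i n (int s)\<bar>) = (\<lambda>y. (y = aL i n) \<noteq> (y = n+1))"
      proof (rule ext)
        fix y
        have "(\<exists>s. ((s=1) \<noteq> (s = n+1)) \<and> y = nat \<bar>Pn i n (int s)\<bar>) \<longleftrightarrow> (y = aL i n \<or> y = n+1)"
          using n1 fx by (auto simp: aL_def)
        then show "(\<exists>s. ((s=1) \<noteq> (s = n+1)) \<and> y = nat \<bar>Pn i n (int s)\<bar>) = ((y = aL i n) \<noteq> (y = n+1))"
          using ne by auto
      qed
      have "Pn i n \<circ> wD n = flipP (\<lambda>y. (y = aL i n) \<noteq> (y = n+1)) \<circ> Pn i n"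
        using comp_flip[OF odd inj] wD_flip[OF n1] d by simp
      then have "elemD (Suc n) i j = flipP X \<circ> flipP (\<lambda>y. (y = aL i n) \<noteq> (y = n+1)) \<circ> Pn i n \<circ> T"
        using E True by (simp add: comp_assoc)
      then show ?thesis using PS X_def True n1 by (simp add: flipP_comp comp_assoc)
    qed
  qed
qed

lemma maj_list: "maj_at i L = sum_list (map i [2..<L+1])"
proof -
  have "{2..L} = set [2..<L+1]" by auto
  then show ?thesis unfolding maj_at_def using sum_set_upt_conv_sum_list_nat by metis
qed

locale hyp =
  fixes n :: nat and i j :: "nat \<Rightarrow> nat"
  assumes n2: "2 \<le> n"
    and valid: "valid_exps n i j"
    and ne: "tIdx n i \<noteq> {}"
    and sumle: "(\<Sum>k\<in>tIdx n i. i k) \<le> k1 n i"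
begin

lemma fin: "finite (tIdx n i)"
  by (rule finite_subset[of _ "{2..n}"]) (auto simp: tIdx_def)

lemma K_in: "k1 n i \<in> tIdx n i"
  unfolding k1_def using fin ne by (rule Min_in)

lemma K_props: "2 \<le> k1 n i" "k1 n i \<le> n" "1 \<le> i (k1 n i)"
  using K_in by (auto simp: tIdx_def)

lemma K_le: "2 \<le> k \<Longrightarrow> k \<le> n \<Longrightarrow> 1 \<le> i k \<Longrightarrow> k1 n i \<le> k"
  unfolding k1_def using fin by (intro Min_le) (auto simp: tIdx_def)

lemma below_K: "2 \<le> k \<Longrightarrow> k < k1 n i \<Longrightarrow> i k = 0"
  using K_le K_props(2) by fastforce

lemma maj_le: "L \<le> n \<Longrightarrow> maj_at i L \<le> k1 n i"
proof -
  assume L: "L \<le> n"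
  have "maj_at i L = (\<Sum>k\<in>{k\<in>{2..L}. i k \<noteq> 0}. i k)"
    unfolding maj_at_def by (rule sum.mono_neutral_right) auto
  also have "\<dots> \<le> (\<Sum>k\<in>tIdx n i. i k)"
    using L fin by (intro sum_mono2) (auto simp: tIdx_def)
  finally show ?thesis using sumle by simp
qed

lemma aL_formula:
  assumes L: "L \<le> n"
  shows "aL i L = (if 1 \<le> maj_at i L \<and> maj_at i L < k1 n i then maj_at i L + 1 else 1)"
proof -
  define K where "K = k1 n i"
  have ml: "maj_at i L \<le> K" using maj_le L K_def by simp
  have cond: "\<And>k. k \<in> set [2..<L+1] \<Longrightarrow> i k = 0 \<or> K \<le> k"
    using below_K L K_def by fastforce
  show ?thesis
  proof (cases "maj_at i L < K")
    case True
    have "Pn i L 1 = 1 + int (maj_at i L)"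
      unfolding Pn_def maj_list using cond True unfolding maj_list by (intro Pn_list[where K=K]) auto
    moreover have "nat (1 + int (maj_at i L)) = maj_at i L + 1" by simp
    ultimately show ?thesis using True K_def by (auto simp: aL_def)
  next
    case False
    then have eq: "maj_at i L = K" using ml by simp
    have KL: "K \<le> L"
    proof (rule ccontr)
      assume "\<not> K \<le> L"
      then have "\<forall>k\<in>{2..L}. i k = 0" using below_K K_def by auto
      then have "maj_at i L = 0" by (simp add: maj_at_def)
      then show False using eq K_props(1) K_def by simp
    qed
    have K2: "2 \<le> K" using K_props K_def by simp
    have split: "[2..<L+1] = [2..<K] @ K # [K+1..<L+1]"
      using KL K2 by (metis Suc_eq_plus1 le_Suc_eq le_add_diff_inverse less_Suc_eq_le upt_add_eq_append upt_conv_Cons)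
    have z: "\<forall>k\<in>set [2..<K]. i k = 0" using below_K K_def by auto
    then have zs: "sum_list (map i [2..<K]) = 0" by (simp add: sum_list_eq_0_iff)
    define s where "s = sum_list (map i [K+1..<L+1])"
    have msum: "maj_at i L = i K + s" unfolding maj_list split s_def using zs by simp
    have iK: "1 \<le> i K" using K_props K_def by simp
    have sK: "1 + int s \<le> int K" using eq msum iK by simp
    have B: "prodl (map (\<lambda>k. tD k ^^ i k) [K+1..<L+1]) 1 = 1 + int s"
      unfolding s_def by (rule Pn_list[where K=K]) (use sK[unfolded s_def] in auto)
    have C: "(tD K ^^ i K) (1 + int s) = 1"
      using iK eq msum by (intro tD_pow_wrap) auto
    have A: "prodl (map (\<lambda>k. tD k ^^ i k) [2..<K]) 1 = 1"
      using z by (intro prodl_fix) auto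
    have "Pn i L 1 = 1" unfolding Pn_def split using A B C by simp
    then show ?thesis using False K_def by (simp add: aL_def)
  qed
qed

end



lemma odd_sum_card: "finite A \<Longrightarrow> odd (sum f A) = odd (card {x\<in>A. odd ((f x)::nat)})"
proof (induction A rule: finite_induct)
  case empty then show ?case by simp
next
  case (insert a A)
  have fin: "finite {x\<in>A. odd (f x)}" using insert by simp
  show ?case
  proof (cases "odd (f a)")
    case True
    then have "{x\<in>insert a A. odd (f x)} = insert a {x\<in>A. odd (f x)}" by auto
    then show ?thesis using insert True fin by simp
  next
    case False
    then have "{x\<in>insert a A. odd (f x)} = {x\<in>A. odd (f x)}" by auto
    then show ?thesis using insert False by simp
  qed
qed

lemma maj_Suc: "1 \<le> m \<Longrightarrow> maj_at i (Suc m) = maj_at i m + i (Suc m)"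
proof -
  assume "1 \<le> m"
  then have "{2..Suc m} = insert (Suc m) {2..m}" by auto
  then show ?thesis by (simp add: maj_at_def)
qed

lemma maj_eq: "L0 \<le> L' \<Longrightarrow> 1 \<le> L0 \<Longrightarrow> (\<forall>k. L0 < k \<and> k \<le> L' \<longrightarrow> i k = 0) \<Longrightarrow> maj_at i L' = maj_at i L0"
proof (induction L' rule: dec_induct)
  case base then show ?case by simp
next
  case (step m) then show ?case using maj_Suc[of m i] by simp
qed

lemma comb:
  assumes GG: "\<And>L L'. maj_at i L = maj_at i L' \<Longrightarrow> G L = G L'"
  shows "xorL (\<lambda>L. j L = 1 \<and> G L) [1..<n] =
         xorL (\<lambda>L. run_start n i j L \<and> odd (card (run_of n i j L)) \<and> G L) [1..<n]"
proof -
  define S where "S = {L \<in> {1..<n}. j L = 1 \<and> G L}"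
  define RS where "RS = {L \<in> {1..<n}. run_start n i j L \<and> G L}"
  have l1: "xorL (\<lambda>L. j L = 1 \<and> G L) [1..<n] = odd (card S)"
    unfolding S_def by (subst xorL_card) auto
  have l2: "xorL (\<lambda>L. run_start n i j L \<and> odd (card (run_of n i j L)) \<and> G L) [1..<n]
        = odd (card {L\<in>RS. odd (card (run_of n i j L))})"
  proof -
    have "{L\<in>RS. odd (card (run_of n i j L))} = {L \<in> set [1..<n]. run_start n i j L \<and> odd (card (run_of n i j L)) \<and> G L}"
      unfolding RS_def by auto
    then show ?thesis by (subst xorL_card) auto
  qed
  have finR: "finite RS" unfolding RS_def by simp
  have finr: "\<forall>L\<in>RS. finite (run_of n i j L)"
    by (auto simp: run_of_def intro: finite_subset[of _ "{..n}"])
  have disj: "\<forall>L0\<in>RS. \<forall>L1\<in>RS. L0 \<noteq> L1 \<longrightarrow> run_of n i j L0 \<inter> run_of n i j L1 = {}"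
  proof (intro ballI impI)
    fix L0 L1 assume h: "L0 \<in> RS" "L1 \<in> RS" "L0 \<noteq> L1"
    have key: "run_of n i j a \<inter> run_of n i j b = {}" if "a \<in> RS" "b \<in> RS" "a < b" for a b
    proof (rule ccontr)
      assume "run_of n i j a \<inter> run_of n i j b \<noteq> {}"
      then obtain x where x: "x \<in> run_of n i j a" "x \<in> run_of n i j b" by blast
      have rb: "run_start n i j b" using that(2) by (simp add: RS_def)
      have ra: "1 \<le> a" "j a = 1" using that(1) by (auto simp: RS_def run_start_def)
      have "\<exists>k. a < k \<and> k \<le> b \<and> 1 \<le> i k" using rb ra \<open>a < b\<close> unfolding run_start_def by blast
      then obtain k where k: "a < k" "k \<le> b" "1 \<le> i k" by blast
      have "b \<le> x" using x by (simp add: run_of_def)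
      then have "i k = 0" using x k by (simp add: run_of_def)
      then show False using k by simp
    qed
    show "run_of n i j L0 \<inter> run_of n i j L1 = {}"
    proof (cases "L0 < L1")
      case True then show ?thesis using key h by simp
    next
      case False then have "L1 < L0" using h(3) by simp
      then show ?thesis using key h by blast
    qed
  qed
  have SU: "S = \<Union> (run_of n i j ` RS)"
  proof
    show "\<Union> (run_of n i j ` RS) \<subseteq> S"
    proof
      fix x assume "x \<in> \<Union> (run_of n i j ` RS)"
      then obtain L0 where L0: "L0 \<in> RS" "x \<in> run_of n i j L0" by blast
      then have r: "L0 \<le> x" "x \<le> n - 1" "j x = 1" "\<forall>k. L0 < k \<and> k \<le> x \<longrightarrow> i k = 0"
        by (auto simp: run_of_def)
      have "1 \<le> L0" "L0 < n" "G L0" using L0 by (auto simp: RS_def)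
      then have "maj_at i x = maj_at i L0" using maj_eq[OF r(1) _ r(4)] by simp
      then have "G x" using GG[of x L0] \<open>G L0\<close> by simp
      then show "x \<in> S" using r \<open>1 \<le> L0\<close> \<open>L0 < n\<close> by (auto simp: S_def)
    qed
  next
    show "S \<subseteq> \<Union> (run_of n i j ` RS)"
    proof
      fix L assume "L \<in> S"
      then have L: "1 \<le> L" "L < n" "j L = 1" "G L" by (auto simp: S_def)
      define M where "M = {L''. 1 \<le> L'' \<and> L'' \<le> L \<and> j L'' = 1 \<and> (\<forall>k. L'' < k \<and> k \<le> L \<longrightarrow> i k = 0)}"
      have LM: "L \<in> M" using L by (auto simp: M_def)
      have finM: "finite M" by (auto simp: M_def intro: finite_subset[of _ "{..L}"])
      define L0 where "L0 = Min M"
      have L0M: "L0 \<in> M" unfolding L0_def using finM LM by (intro Min_in) auto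
      have L0min: "\<And>x. x \<in> M \<Longrightarrow> L0 \<le> x" unfolding L0_def using finM by simp
      have p: "1 \<le> L0" "L0 \<le> L" "j L0 = 1" "\<forall>k. L0 < k \<and> k \<le> L \<longrightarrow> i k = 0"
        using L0M by (auto simp: M_def)
      have rs: "run_start n i j L0"
        unfolding run_start_def
      proof (intro conjI allI impI)
        show "1 \<le> L0" "L0 \<le> n - 1" "j L0 = 1" using p L by auto
        fix L' assume h: "1 \<le> L' \<and> L' < L0 \<and> j L' = 1"
        show "\<exists>k. L' < k \<and> k \<le> L0 \<and> 1 \<le> i k"
        proof (rule ccontr)
          assume "\<not> (\<exists>k. L' < k \<and> k \<le> L0 \<and> 1 \<le> i k)"
          then have nz: "\<And>k. L' < k \<Longrightarrow> k \<le> L0 \<Longrightarrow> i k = 0" by force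
          have "\<forall>k. L' < k \<and> k \<le> L \<longrightarrow> i k = 0"
          proof (intro allI impI)
            fix k assume hk: "L' < k \<and> k \<le> L"
            show "i k = 0"
            proof (cases "k \<le> L0")
              case True then show ?thesis using nz hk by simp
            next
              case False then show ?thesis using p(4) hk by simp
            qed
          qed
          then have "L' \<in> M" using h p by (auto simp: M_def)
          then show False using L0min[of L'] h by simp
        qed
      qed
      have mj: "maj_at i L = maj_at i L0" using maj_eq[OF p(2) p(1) p(4)] .
      have "G L0" using GG[OF mj] L by simp
      then have "L0 \<in> RS" using rs p L by (auto simp: RS_def)
      moreover have "L \<in> run_of n i j L0" using p L by (auto simp: run_of_def)
      ultimately show "L \<in> \<Union> (run_of n i j ` RS)" by blast
    qed
  qed
  have "card S = (\<Sum>L\<in>RS. card (run_of n i j L))"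
    unfolding SU using finR finr disj by (rule card_UN_disjoint)
  then have "odd (card S) = odd (card {L\<in>RS. odd (card (run_of n i j L))})"
    using odd_sum_card[OF finR] by simp
  then show ?thesis using l1 l2 by simp
qed


lemma prodl_filter_id: "(\<And>x. \<not> P x \<Longrightarrow> f x = id) \<Longrightarrow> prodl (map f (filter P xs)) = prodl (map f xs)"
  by (induction xs) auto

lemma oddf_abs: "oddf f \<Longrightarrow> \<bar>f (int (nat \<bar>z\<bar>))\<bar> = \<bar>f z\<bar>"
proof (cases "z \<ge> 0")
  case True then show ?thesis by simp
next
  case False
  assume o: "oddf f"
  from False have "int (nat \<bar>z\<bar>) = - z" by simp
  then have "f (int (nat \<bar>z\<bar>)) = - f z" using o unfolding oddf_def by metis
  then show ?thesis by simp
qed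

lemma oddf_abs2: "oddf f \<Longrightarrow> \<bar>f \<bar>z\<bar>\<bar> = \<bar>f z\<bar>"
  using oddf_abs[of f z] by simp

lemma Phi_comp: "oddf f \<Longrightarrow> Phi (f \<circ> g) = Phi f \<circ> Phi g"
  by (auto simp: Phi_def fun_eq_iff oddf_abs2)
lemma Phi_id: "Phi id = id"
  by (auto simp: Phi_def fun_eq_iff)
lemma Phi_pow: "oddf f \<Longrightarrow> Phi (f ^^ m) = Phi f ^^ m"
  by (induction m) (auto simp: Phi_id Phi_comp)
lemma Phi_prodl: "(\<And>f. f \<in> set fs \<Longrightarrow> oddf f) \<Longrightarrow> Phi (prodl fs) = prodl (map Phi fs)"
  by (induction fs) (auto simp: Phi_id Phi_comp)
lemma Phi_sD: "1 \<le> a \<Longrightarrow> Phi (sD a) = sS a"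
  by (auto simp: Phi_def sD_def sS_def fun_eq_iff)
lemma tD_odd: "oddf (tD k)"
  using tD_Scirc[of k k] Scirc_odd by blast
lemma tD_pow_odd: "oddf (tD k ^^ m)"
  using gen_pow[OF tD_Scirc[of k k, unfolded Scirc_GS]] Scirc_odd Scirc_GS by blast
lemma Phi_tD: "Phi (tD k) = tS k"
proof -
  have "Phi (tD k) = prodl (map Phi (map sD [1..<k]))"
    unfolding tD_def by (rule Phi_prodl) (auto intro: sD_odd)
  also have "map Phi (map sD [1..<k]) = map sS [1..<k]" by (auto simp: Phi_sD)
  finally show ?thesis by (simp add: tS_def)
qed

lemma Scirc_unique: "b \<in> Scirc n \<Longrightarrow> c \<in> Scirc n \<Longrightarrow> Phi b = Phi c \<Longrightarrow> b = c"
proof (rule ext)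
  fix x assume b: "b \<in> Scirc n" and c: "c \<in> Scirc n" and e: "Phi b = Phi c"
  have ob: "oddf b" and oc: "oddf c" using b c Scirc_odd by auto
  have pb: "\<forall>x>0. b x > 0" and pc: "\<forall>x>0. c x > 0" using b c Scirc_pos by auto
  have pos: "b z = c z" if "z > 0" for z
  proof -
    have "nat \<bar>b (int (nat z))\<bar> = nat \<bar>c (int (nat z))\<bar>" using e unfolding Phi_def by metis
    then have "nat \<bar>b z\<bar> = nat \<bar>c z\<bar>" using that by simp
    then have "\<bar>b z\<bar> = \<bar>c z\<bar>" by (metis abs_ge_zero nat_0_le)
    moreover have "b z > 0" "c z > 0" using that pb pc by auto
    ultimately show ?thesis by simp
  qed
  show "b x = c x"
  proof (cases "x > 0")
    case True then show ?thesis using pos by simp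
  next
    case False
    show ?thesis
    proof (cases "x = 0")
      case True
      have "b 0 = - b 0" "c 0 = - c 0" using ob oc unfolding oddf_def by (metis minus_zero)+
      then show ?thesis using True by simp
    next
      case False
      then have "-x > 0" using \<open>\<not> x > 0\<close> by simp
      then have "b (-x) = c (-x)" using pos by blast
      then show ?thesis using ob oc unfolding oddf_def by (metis minus_minus)
    qed
  qed
qed

context hyp
begin

lemma jle: "1 \<le> k \<Longrightarrow> k < n \<Longrightarrow> j k \<le> 1"
  using valid by (simp add: valid_exps_def)

lemma pc_eq: "pi_circ n i = Pn i n"
  unfolding pi_circ_def Pn_def
proof (rule prodl_filter_id)
  fix x assume "\<not> 1 \<le> i x"
  then have "i x = 0" by simp
  then show "tD x ^^ i x = id" by simp
qed

definition Yf :: "nat \<Rightarrow> bool" where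
  "Yf y = (xorL (\<lambda>L. (y=1) \<noteq> (y = maj_at i L + 1)) (A_starts n i j) \<noteq>
           xorL (\<lambda>L. (y=1) \<noteq> (y = L + 1)) (filter (\<lambda>L. j L = 1) [1..<n]))"

lemma A_props: "L \<in> set (A_starts n i j) \<Longrightarrow> 1 \<le> maj_at i L \<and> maj_at i L < k1 n i \<and> run_start n i j L"
  by (auto simp: A_starts_def run_starts_def)

lemma pb_eq: "pi_bullet n i j = flipP Yf"
proof -
  have 1: "map (\<lambda>L. wD (maj_at i L)) (A_starts n i j) =
        map (\<lambda>L. flipP (\<lambda>s. (s=1) \<noteq> (s = maj_at i L + 1))) (A_starts n i j)"
    using A_props wD_flip by auto
  have 2: "map wD (filter (\<lambda>L. j L = 1) [1..<n]) =
        map (\<lambda>L. flipP (\<lambda>s. (s=1) \<noteq> (s = L + 1))) (filter (\<lambda>L. j L = 1) [1..<n])"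
    using wD_flip by auto
  show ?thesis unfolding pi_bullet_def 1 2 prodl_flips flipP_comp Yf_def ..
qed

lemma X_eq_Y: "(\<lambda>y. xorL (\<lambda>L. j L = 1 \<and> ((y = aL i L) \<noteq> (y = L+1))) [1..<n]) = Yf"
proof (rule ext)
  fix y
  define K where "K = k1 n i"
  define G where "G L = (1 \<le> maj_at i L \<and> maj_at i L < K \<and> ((y = maj_at i L + 1) \<noteq> (y = 1)))" for L
  have GG: "\<And>L L'. maj_at i L = maj_at i L' \<Longrightarrow> G L = G L'" unfolding G_def by simp
  have "xorL (\<lambda>L. j L = 1 \<and> ((y = aL i L) \<noteq> (y = L+1))) [1..<n] =
        xorL (\<lambda>L. (j L = 1 \<and> G L) \<noteq> (j L = 1 \<and> ((y=1) \<noteq> (y=L+1)))) [1..<n]"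
  proof (rule xorL_cong)
    fix L assume "L \<in> set [1..<n]"
    then have "L \<le> n" by simp
    then show "(j L = 1 \<and> ((y = aL i L) \<noteq> (y = L+1))) = ((j L = 1 \<and> G L) \<noteq> (j L = 1 \<and> ((y=1) \<noteq> (y=L+1))))"
      using aL_formula[of L] unfolding G_def K_def by auto
  qed
  also have "\<dots> = (xorL (\<lambda>L. j L = 1 \<and> G L) [1..<n] \<noteq> xorL (\<lambda>L. j L = 1 \<and> ((y=1) \<noteq> (y=L+1))) [1..<n])"
    by (rule xorL_xor)
  also have "xorL (\<lambda>L. j L = 1 \<and> G L) [1..<n] =
         xorL (\<lambda>L. run_start n i j L \<and> odd (card (run_of n i j L)) \<and> G L) [1..<n]"
    using comb[of i G] GG by blast
  also have "\<dots> = xorL (\<lambda>L. (y=1) \<noteq> (y = maj_at i L + 1)) (A_starts n i j)"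
    unfolding A_starts_def run_starts_def xorL_filter G_def K_def
    by (rule xorL_cong) auto
  finally show "xorL (\<lambda>L. j L = 1 \<and> ((y = aL i L) \<noteq> (y = L+1))) [1..<n] = Yf y"
    unfolding Yf_def xorL_filter by simp
qed

lemma elem_eq: "elemD n i j = pi_bullet n i j \<circ> pi_circ n i"
  using elemD_decomp[of n j i] jle X_eq_Y pb_eq pc_eq by simp

lemma pb_Dn: "pi_bullet n i j \<in> Dn n"
proof -
  have "prodl (map (\<lambda>L. wD (maj_at i L)) (A_starts n i j)) \<in> gen (GD n)"
  proof (rule gen_prodl, rule subsetI)
    fix f assume "f \<in> set (map (\<lambda>L. wD (maj_at i L)) (A_starts n i j))"
    then obtain L where L: "L \<in> set (A_starts n i j)" "f = wD (maj_at i L)" by auto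
    then have "maj_at i L \<le> n - 1" using A_props K_props by fastforce
    then show "f \<in> gen (GD n)" using wD_Dn Dn_GD L by auto
  qed
  moreover have "prodl (map wD (filter (\<lambda>L. j L = 1) [1..<n])) \<in> gen (GD n)"
    by (rule gen_prodl) (auto intro!: wD_Dn[unfolded Dn_GD])
  ultimately have "prodl (map (\<lambda>L. wD (maj_at i L)) (A_starts n i j)) \<circ> prodl (map wD (filter (\<lambda>L. j L = 1) [1..<n])) \<in> gen (GD n)"
    by (metis gen_comp)
  then show ?thesis unfolding pi_bullet_def Dn_GD .
qed

lemma pb_Id: "pi_bullet n i j \<in> IdBullet n"
  using pb_Dn pb_eq Phi_flipP by (simp add: IdBullet_def)

lemma pc_S: "pi_circ n i \<in> Scirc n"
  using pc_eq Pn_Scirc by simp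

lemma uniq: "a \<in> IdBullet n \<Longrightarrow> b \<in> Scirc n \<Longrightarrow> elemD n i j = a \<circ> b \<Longrightarrow> a = pi_bullet n i j \<and> b = pi_circ n i"
proof -
  assume a: "a \<in> IdBullet n" and b: "b \<in> Scirc n" and e: "elemD n i j = a \<circ> b"
  have eq: "a \<circ> b = pi_bullet n i j \<circ> pi_circ n i" using e elem_eq by simp
  have oa: "oddf a" using a Dn_odd by (auto simp: IdBullet_def)
  have Pa: "Phi a = id" using a by (simp add: IdBullet_def)
  have "Phi (a \<circ> b) = Phi b" using Phi_comp[OF oa] Pa by simp
  moreover have "Phi (pi_bullet n i j \<circ> pi_circ n i) = Phi (pi_circ n i)"
    using Phi_comp[OF flipP_odd] pb_eq Phi_flipP by simp
  ultimately have "Phi b = Phi (pi_circ n i)" using eq by simp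
  then have bb: "b = pi_circ n i" using Scirc_unique b pc_S by blast
  obtain h where h: "b \<circ> h = id" using Dn_inv Scirc_Dn b by blast
  have "a = a \<circ> b \<circ> h" using h by (simp add: comp_assoc)
  also have "\<dots> = pi_bullet n i j \<circ> b \<circ> h" using eq bb by simp
  also have "\<dots> = pi_bullet n i j" using h by (simp add: comp_assoc)
  finally show ?thesis using bb by simp
qed

lemma Phi_pc: "Phi (pi_circ n i) = prodl (map (\<lambda>k. tS k ^^ i k) [2..<n+1])"
proof -
  have "Phi (pi_circ n i) = prodl (map Phi (map (\<lambda>k. tD k ^^ i k) [2..<n+1]))"
    unfolding pc_eq Pn_def by (rule Phi_prodl) (auto intro: tD_pow_odd)
  also have "map Phi (map (\<lambda>k. tD k ^^ i k) [2..<n+1]) = map (\<lambda>k. tS k ^^ i k) [2..<n+1]"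
    by (auto simp: Phi_pow tD_odd Phi_tD)
  finally show ?thesis .
qed

lemma Phi_e: "Phi (pi_circ n i) = Phi (elemD n i j)"
  using elem_eq Phi_comp[OF flipP_odd] pb_eq Phi_flipP by simp

end

theorem mainTheorem8:
  fixes n :: nat and i j :: "nat \<Rightarrow> nat"
  assumes "2 \<le> n"
    and "valid_exps n i j"
    and "tIdx n i \<noteq> {}"
    and "(\<Sum>k\<in>tIdx n i. i k) \<le> k1 n i"
  shows "pi_bullet n i j \<in> IdBullet n \<and> pi_circ n i \<in> Scirc n
         \<and> elemD n i j = pi_bullet n i j \<circ> pi_circ n i
         \<and> (\<forall>a b. a \<in> IdBullet n \<and> b \<in> Scirc n \<and> elemD n i j = a \<circ> b
                \<longrightarrow> a = pi_bullet n i j \<and> b = pi_circ n i)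
         \<and> Phi (pi_circ n i) = prodl (map (\<lambda>k. tS k ^^ i k) [2..<n+1])
         \<and> Phi (pi_circ n i) = Phi (elemD n i j)"
proof -
  interpret hyp n i j using assms by unfold_locales
  show ?thesis using pb_Id pc_S elem_eq uniq Phi_pc Phi_e by blast
qed

end
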